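(* Let $0=p_0<p_1<\cdots<p_M<p_{M+1}=1$ and let $c$ be a risk model on a labelled sample $\{(\bm x_j,y_j)\}_{j=1}^N$. (a) If for some $k\in\{0,1,\dots,M-1\}$ we have $p_{k+1}N_k<O_k$, then the model $c_k'$ defined by $c_k'(\bm x_j)=p_{k+1}$ if $c(\bm x_j)\in[p_k,p_{k+1})$ and $c_k'(\bm x_j)=c(\bm x_j)$ otherwise, has strictly larger $\mathrm{AUNBC}$ than $c$. (b) If for some $k\in\{1,\dots,M\}$ we have $p_kN_k>O_k$, then the model $c_k''$ defined by $c_k''(\bm x_j)=p_{k-1}$ if $c(\bm x_j)\in G_k$ and $c_k''(\bm x_j)=c(\bm x_j)$ otherwise, has strictly larger $\mathrm{AUNBC}$ than $c$.
   Context: A risk model is any function $c$ assigning to each sample a value $c(\bm x_j)\in[0,1]$. For $i=0,\dots,M$, $\mathrm{TP}_i(c)=\#\{j:c(\bm x_j)\ge p_i,\ y_j=1\}$, $\mathrm{FP}_i(c)=\#\{j:c(\bm x_j)\ge p_i,\ y_j=0\}$, with $\mathrm{TP}_{M+1}=\mathrm{FP}_{M+1}=0$, and $\mathrm{AUNBC}(c)=\frac1N\sum_{i=0}^M(p_{i+1}-p_i)\big(\mathrm{TP}_i(c)-\mathrm{FP}_i(c)\frac{p_i}{1-p_i}\big)$. The risk groups are $G_i=[p_i,p_{i+1})$ for $i=0,\dots,M-1$ and $G_M=[p_M,1]$; $N_i$ is the number of samples with $c(\bm x_j)\in G_i$ and $O_i$ the number of positive samples ($y_j=1$) with $c(\bm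 x_j)\in G_i$ (equivalently $O_i=\mathrm{TP}_i-\mathrm{TP}_{i+1}$, $N_i=O_i+\mathrm{FP}_i-\mathrm{FP}_{i+1}$). *)

theory Defs
  imports Complex_Main
begin

definition TP :: "(nat \<Rightarrow> real) \<Rightarrow> ('a \<Rightarrow> real) \<Rightarrow> (nat \<Rightarrow> 'a) \<Rightarrow> (nat \<Rightarrow> bool) \<Rightarrow> nat \<Rightarrow> nat \<Rightarrow> nat" where
  "TP p c x y N i = card {j \<in> {1..N}. c (x j) \<ge> p i \<and> y j}"

definition FP :: "(nat \<Rightarrow> real) \<Rightarrow> ('a \<Rightarrow> real) \<Rightarrow> (nat \<Rightarrow> 'a) \<Rightarrow> (nat \<Rightarrow> bool) \<Rightarrow> nat \<Rightarrow> nat \<Rightarrow> nat" where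
  "FP p c x y N i = card {j \<in> {1..N}. c (x j) \<ge> p i \<and> \<not> y j}"

definition AUNBC :: "(nat \<Rightarrow> real) \<Rightarrow> nat \<Rightarrow> ('a \<Rightarrow> real) \<Rightarrow> (nat \<Rightarrow> 'a) \<Rightarrow> (nat \<Rightarrow> bool) \<Rightarrow> nat \<Rightarrow> real" where
  "AUNBC p M c x y N = (1 / real N) * (\<Sum>i = 0..M. (p (i+1) - p i) *
     (real (TP p c x y N i) - real (FP p c x y N i) * (p i / (1 - p i))))"

definition riskgroup :: "(nat \<Rightarrow> real) \<Rightarrow> nat \<Rightarrow> nat \<Rightarrow> real set" where
  "riskgroup p M i = (if i < M then {p i..<p (i+1)} else {p M..1})"

definition Ncount :: "(nat \<Rightarrow> real) \<Rightarrow> nat \<Rightarrow> ('a \<Rightarrow> real) \<Rightarrow> (nat \<Rightarrow> 'a) \<Rightarrow> nat \<Rightarrow> nat \<Rightarrow> nat" where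
  "Ncount p M c x N i = card {j \<in> {1..N}. c (x j) \<in> riskgroup p M i}"

definition Ocount :: "(nat \<Rightarrow> real) \<Rightarrow> nat \<Rightarrow> ('a \<Rightarrow> real) \<Rightarrow> (nat \<Rightarrow> 'a) \<Rightarrow> (nat \<Rightarrow> bool) \<Rightarrow> nat \<Rightarrow> nat \<Rightarrow> nat" where
  "Ocount p M c x y N i = card {j \<in> {1..N}. c (x j) \<in> riskgroup p M i \<and> y j}"

end

theory Submission
  imports Defs
begin

lemma pmono_le:
  fixes p :: "nat \<Rightarrow> real"
  assumes pmono: "\<And>i. i \<le> M \<Longrightarrow> p i < p (i+1)"
  shows "i < j \<Longrightarrow> j \<le> M + 1 \<Longrightarrow> p i < p j"
proof (induction j)
  case 0 then show ?case by simp
next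
  case (Suc j)
  then show ?case
    using pmono[of j] by (cases "i < j") (auto simp: less_Suc_eq)
qed

lemma sum_change:
  fixes f g :: "nat \<Rightarrow> real"
  assumes "m \<le> M" "\<And>i. i \<le> M \<Longrightarrow> i \<noteq> m \<Longrightarrow> f i = g i"
  shows "(\<Sum>i=0..M. f i) - (\<Sum>i=0..M. g i) = f m - g m"
proof -
  have "(\<Sum>i=0..M. f i) = f m + (\<Sum>i\<in>{0..M}-{m}. f i)"
    using assms(1) by (simp add: sum.remove)
  moreover have "(\<Sum>i=0..M. g i) = g m + (\<Sum>i\<in>{0..M}-{m}. g i)"
    using assms(1) by (simp add: sum.remove)
  moreover have "(\<Sum>i\<in>{0..M}-{m}. f i) = (\<Sum>i\<in>{0..M}-{m}. g i)"
    using assms(2) by (intro sum.cong) auto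
  ultimately show ?thesis by simp
qed

lemma lin_id: "s - t = u \<Longrightarrow> (a::real) * s - a * t = a * u"
  by (simp add: right_diff_distrib[symmetric])

lemma alg_id: "(d::real) * (a - b * q) - d * (a' - b' * q) = d * ((a - a') - (b - b') * q)"
  by (simp add: algebra_simps)

lemma aunbc_change:
  assumes "m \<le> M"
    and "\<And>i. i \<le> M \<Longrightarrow> i \<noteq> m \<Longrightarrow> TP p c' x y N i = TP p c x y N i \<and> FP p c' x y N i = FP p c x y N i"
  shows "AUNBC p M c' x y N - AUNBC p M c x y N =
    (1 / real N) * ((p (m+1) - p m) * ((real (TP p c' x y N m) - real (TP p c x y N m))
       - (real (FP p c' x y N m) - real (FP p c x y N m)) * (p m / (1 - p m))))"
proof -
  let ?f = "\<lambda>i. (p (i+1) - p i) * (real (TP p c' x y N i) - real (FP p c' x y N i) * (p i / (1 - p i)))"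
  let ?g = "\<lambda>i. (p (i+1) - p i) * (real (TP p c x y N i) - real (FP p c x y N i) * (p i / (1 - p i)))"
  have "(\<Sum>i=0..M. ?f i) - (\<Sum>i=0..M. ?g i) = ?f m - ?g m"
    using sum_change[of m M ?f ?g] assms by auto
  also have "?f m - ?g m = (p (m+1) - p m) * ((real (TP p c' x y N m) - real (TP p c x y N m))
       - (real (FP p c' x y N m) - real (FP p c x y N m)) * (p m / (1 - p m)))"
    by (rule alg_id)
  finally show ?thesis unfolding AUNBC_def by (rule lin_id)
qed

lemma card_split:
  assumes "finite A" "A = B \<union> C" "B \<inter> C = {}"
  shows "card A = card B + card C"
  using assms by (simp add: card_Un_disjoint)

theorem theorem2:
  fixes p :: "nat \<Rightarrow> real" and M N :: nat and c :: "'a \<Rightarrow> real"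
    and x :: "nat \<Rightarrow> 'a" and y :: "nat \<Rightarrow> bool"
  assumes p0: "p 0 = 0"
    and pmono: "\<And>i. i \<le> M \<Longrightarrow> p i < p (i+1)"
    and pM1: "p (M+1) = 1"
    and risk: "\<And>j. j \<in> {1..N} \<Longrightarrow> 0 \<le> c (x j) \<and> c (x j) \<le> 1"
  shows "(\<forall>k < M. p (k+1) * real (Ncount p M c x N k) < real (Ocount p M c x y N k) \<longrightarrow>
            AUNBC p M (\<lambda>z. if c z \<in> {p k..<p (k+1)} then p (k+1) else c z) x y N
              > AUNBC p M c x y N)
       \<and> (\<forall>k \<in> {1..M}. p k * real (Ncount p M c x N k) > real (Ocount p M c x y N k) \<longrightarrow>
            AUNBC p M (\<lambda>z. if c z \<in> riskgroup p M k then p (k-1) else c z) x y N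
              > AUNBC p M c x y N)"
proof (intro conjI allI impI ballI)
  have lt: "\<And>i j. i < j \<Longrightarrow> j \<le> M + 1 \<Longrightarrow> p i < p j"
    using pmono_le[of M p, OF pmono] by blast
  have le: "\<And>i j. i \<le> j \<Longrightarrow> j \<le> M + 1 \<Longrightarrow> p i \<le> p j"
    using lt by (metis le_less)
  have pl1: "\<And>i. i \<le> M \<Longrightarrow> p i < 1" using lt[of _ "M+1"] pM1 by auto
  define G where "G k = riskgroup p M k" for k
  define A where "A k = card {j \<in> {1..N}. c (x j) \<in> G k \<and> \<not> y j}" for k
  have NOA: "Ncount p M c x N k = Ocount p M c x y N k + A k" for k
    unfolding Ncount_def Ocount_def A_def G_def
    by (rule card_split) auto
  have Npos: "N > 0" if "Ocount p M c x y N k > 0" for k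
  proof (rule ccontr)
    assume "\<not> N > 0" then have "N = 0" by simp
    then show False using that unfolding Ocount_def by simp
  qed
  {
    fix k assume kM: "k < M"
      and h: "p (k+1) * real (Ncount p M c x N k) < real (Ocount p M c x y N k)"
    define c' where "c' = (\<lambda>z. if c z \<in> {p k..<p (k+1)} then p (k+1) else c z)"
    have Gk: "G k = {p k..<p (k+1)}" using kM unfolding G_def riskgroup_def by simp
    have p1: "0 \<le> p (k+1)" using le[of 0 "k+1"] kM p0 by simp
    have Opos: "Ocount p M c x y N k > 0"
    proof -
      have "0 \<le> p (k+1) * real (Ncount p M c x N k)" using p1 by simp
      then have "real (Ocount p M c x y N k) > 0" using h by linarith
      then show ?thesis by simp
    qed
    have Np: "N > 0" using Npos[OF Opos] .
    have pt: "(p i \<le> c' z) = (p i \<le> c z)" if "i \<le> M" "i \<noteq> k+1" for i z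
    proof (cases "c z \<in> {p k..<p (k+1)}")
      case True
      show ?thesis
      proof (cases "i \<le> k")
        case True
        then have "p i \<le> p k" using le kM by simp
        then show ?thesis using \<open>c z \<in> _\<close> unfolding c'_def using lt[of k "k+1"] kM by auto
      next
        case False
        then have "p (k+1) < p i" using lt[of "k+1" i] that by simp
        then show ?thesis using \<open>c z \<in> _\<close> unfolding c'_def by auto
      qed
    qed (auto simp: c'_def)
    have same: "TP p c' x y N i = TP p c x y N i \<and> FP p c' x y N i = FP p c x y N i"
      if "i \<le> M" "i \<noteq> k+1" for i
      unfolding TP_def FP_def using pt[OF that] by simp
    have TPk: "TP p c' x y N (k+1) = TP p c x y N (k+1) + Ocount p M c x y N k"
      unfolding TP_def Ocount_def G_def[symmetric] Gk
      by (rule card_split) (auto simp: c'_def)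
    have FPk: "FP p c' x y N (k+1) = FP p c x y N (k+1) + A k"
      unfolding FP_def A_def Gk
      by (rule card_split) (auto simp: c'_def)
    have d: "AUNBC p M c' x y N - AUNBC p M c x y N =
      (1 / real N) * ((p (k+2) - p (k+1)) * (real (Ocount p M c x y N k)
       - real (A k) * (p (k+1) / (1 - p (k+1)))))"
      using aunbc_change[of "k+1" M p c' x y N c] same kM TPk FPk by simp
    have q1: "p (k+1) < 1" using pl1 kM by simp
    have gap: "p (k+1) < p (k+2)" using pmono[of "k+1"] kM by simp
    have "real (A k) * p (k+1) < real (Ocount p M c x y N k) * (1 - p (k+1))"
      using h NOA[of k] by (simp add: algebra_simps)
    then have "real (A k) * (p (k+1) / (1 - p (k+1))) < real (Ocount p M c x y N k)"
      using q1 by (simp add: pos_divide_less_eq)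
    then have "0 < (1 / real N) * ((p (k+2) - p (k+1)) * (real (Ocount p M c x y N k)
       - real (A k) * (p (k+1) / (1 - p (k+1)))))"
      using Np gap by simp
    with d show "AUNBC p M c' x y N > AUNBC p M c x y N" by simp
  }
  {
    fix k assume kM: "k \<in> {1..M}"
      and h: "p k * real (Ncount p M c x N k) > real (Ocount p M c x y N k)"
    define c' where "c' = (\<lambda>z. if c z \<in> riskgroup p M k then p (k-1) else c z)"
    have Gk: "\<And>v. v \<in> G k \<Longrightarrow> p k \<le> v \<and> (\<forall>i. k < i \<and> i \<le> M \<longrightarrow> v < p i)"
    proof -
      fix v assume "v \<in> G k"
      show "p k \<le> v \<and> (\<forall>i. k < i \<and> i \<le> M \<longrightarrow> v < p i)"
      proof (cases "k < M")
        case True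
        then have "p k \<le> v \<and> v < p (k+1)" using \<open>v \<in> G k\<close> unfolding G_def riskgroup_def by simp
        then show ?thesis
        proof (intro conjI allI impI)
          fix i assume "k < i \<and> i \<le> M"
          then have "p (k+1) \<le> p i" using le[of "k+1" i] by simp
          then show "v < p i" using \<open>p k \<le> v \<and> v < p (k+1)\<close> by linarith
        qed simp
      next
        case False
        then show ?thesis using \<open>v \<in> G k\<close> kM unfolding G_def riskgroup_def by auto
      qed
    qed
    have Npos': "N > 0"
    proof (rule ccontr)
      assume "\<not> N > 0" then have "N = 0" by simp
      then show False using h unfolding Ncount_def Ocount_def by simp
    qed
    have pt: "(p i \<le> c' z) = (p i \<le> c z)" if "i \<le> M" "i \<noteq> k" for i z
    proof (cases "c z \<in> G k")
      case True
      note g = Gk[OF True]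
      show ?thesis
      proof (cases "i < k")
        case True
        then have "p i \<le> p (k-1)" using le[of i "k-1"] kM by simp
        moreover have "p i \<le> p k" using le[of i k] True kM by simp
        ultimately show ?thesis using g unfolding c'_def G_def[symmetric] using \<open>c z \<in> G k\<close> by auto
      next
        case False
        then have "k < i" using that by simp
        then have "c z < p i" using g that by blast
        moreover have "p (k-1) < p i" using lt[of "k-1" i] \<open>k < i\<close> that by simp
        ultimately show ?thesis unfolding c'_def G_def[symmetric] using \<open>c z \<in> G k\<close> by auto
      qed
    qed (auto simp: c'_def G_def)
    have same: "TP p c' x y N i = TP p c x y N i \<and> FP p c' x y N i = FP p c x y N i"
      if "i \<le> M" "i \<noteq> k" for i
      unfolding TP_def FP_def using pt[OF that] by simp
    have plt: "p (k-1) < p k" using lt[of "k-1" k] kM by simp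
    have TPk: "TP p c x y N k = TP p c' x y N k + Ocount p M c x y N k"
      unfolding TP_def Ocount_def G_def[symmetric]
      by (rule card_split) (use Gk plt in \<open>auto simp: c'_def G_def[symmetric]\<close>)
    have FPk: "FP p c x y N k = FP p c' x y N k + A k"
      unfolding FP_def A_def
      by (rule card_split) (use Gk plt in \<open>auto simp: c'_def G_def[symmetric]\<close>)
    have d: "AUNBC p M c' x y N - AUNBC p M c x y N =
      (1 / real N) * ((p (k+1) - p k) * (- real (Ocount p M c x y N k)
       + real (A k) * (p k / (1 - p k))))"
      using aunbc_change[of k M p c' x y N c] same kM TPk FPk by (simp add: algebra_simps)
    have q1: "p k < 1" using pl1 kM by simp
    have gap: "p k < p (k+1)" using pmono[of k] kM by simp
    have "real (A k) * p k > real (Ocount p M c x y N k) * (1 - p k)"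
      using h NOA[of k] by (simp add: algebra_simps)
    then have "real (A k) * (p k / (1 - p k)) > real (Ocount p M c x y N k)"
      using q1 by (simp add: pos_less_divide_eq)
    then have "0 < (1 / real N) * ((p (k+1) - p k) * (- real (Ocount p M c x y N k)
       + real (A k) * (p k / (1 - p k))))"
      using Npos' gap by simp
    with d show "AUNBC p M c' x y N > AUNBC p M c x y N" by simp
  }
qed

end
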